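(* Let $C$ be a cancellative monoid and suppose that $IH^0(C)$ is $0$-bisimple. Then $IH^0(C)$ is $F^*$-inverse if and only if the partially ordered set $P_r(C)$ of principal right ideals of $C$ (ordered by inclusion) is a join semilattice.
   Context: For a right cancellative monoid $C$ and $a\in C$, $\rho_a:C\to C$, $x\mapsto xa$, is regarded as a partial bijection of $C$; the inverse hull $IH(C)$ is the inverse submonoid of the symmetric inverse monoid on $C$ generated by all $\rho_a$, and $IH^0(C)=IH(C)\cup\{\emptyset\}$ with the empty map as zero. An inverse monoid with zero is $0$-bisimple if all its nonzero elements are $\mathscr{D}$-related. The natural partial order on an inverse monoid is $a\le b$ iff $a=eb$ for some idempotent $e$; an inverse monoid is $F^*$-inverse if every nonzero element lies beneath a unique maximal element in this order. A join semilattice is a poset in which any two elements have a least upper bound. *)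

theory Defs
  imports Main
begin

(* Partial bijections of a type 'a are represented by their graphs, i.e. relations
   ('a \<times> 'a) set.  Composition follows the right-action convention used for
   \<rho>_a : x \<mapsto> x a:  f \<cdot> g = "first f, then g" = f O g, so \<rho>_a \<cdot> \<rho>_b = \<rho>_(ab). *)

definition rho :: "'a::monoid_mult \<Rightarrow> ('a \<times> 'a) set" where
  "rho a = {(x, x * a) | x. True}"

inductive_set IH :: "('a::monoid_mult \<times> 'a) set set" where
  gen: "rho a \<in> IH"
| one: "Id \<in> IH"
| inv: "f \<in> IH \<Longrightarrow> f\<inverse> \<in> IH"
| comp: "f \<in> IH \<Longrightarrow> g \<in> IH \<Longrightarrow> f O g \<in> IH"

definition IH0 :: "('a::monoid_mult \<times> 'a) set set" where
  "IH0 = insert {} IH"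

definition idem_in :: "('b \<times> 'b) set set \<Rightarrow> ('b \<times> 'b) set \<Rightarrow> bool" where
  "idem_in S e \<longleftrightarrow> e \<in> S \<and> e O e = e"

definition nat_le :: "('b \<times> 'b) set set \<Rightarrow> ('b \<times> 'b) set \<Rightarrow> ('b \<times> 'b) set \<Rightarrow> bool" where
  "nat_le S a b \<longleftrightarrow> (\<exists>e. idem_in S e \<and> a = e O b)"

(* Green's relations; S is a monoid (contains Id), so S^1 = S *)
definition green_L :: "('b \<times> 'b) set set \<Rightarrow> ('b \<times> 'b) set \<Rightarrow> ('b \<times> 'b) set \<Rightarrow> bool" where
  "green_L S a b \<longleftrightarrow> {s O a | s. s \<in> S} = {s O b | s. s \<in> S}"

definition green_R :: "('b \<times> 'b) set set \<Rightarrow> ('b \<times> 'b) set \<Rightarrow> ('b \<times> 'b) set \<Rightarrow> bool" where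
  "green_R S a b \<longleftrightarrow> {a O s | s. s \<in> S} = {b O s | s. s \<in> S}"

definition green_D :: "('b \<times> 'b) set set \<Rightarrow> ('b \<times> 'b) set \<Rightarrow> ('b \<times> 'b) set \<Rightarrow> bool" where
  "green_D S a b \<longleftrightarrow> (\<exists>c\<in>S. green_L S a c \<and> green_R S c b)"

definition zero_bisimple :: "('b \<times> 'b) set set \<Rightarrow> bool" where
  "zero_bisimple S \<longleftrightarrow> (\<forall>a\<in>S. \<forall>b\<in>S. a \<noteq> {} \<longrightarrow> b \<noteq> {} \<longrightarrow> green_D S a b)"

definition maximal_in :: "('b \<times> 'b) set set \<Rightarrow> ('b \<times> 'b) set \<Rightarrow> bool" where
  "maximal_in S m \<longleftrightarrow> m \<in> S \<and> (\<forall>x\<in>S. nat_le S m x \<longrightarrow> x = m)"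

definition F_star_inverse :: "('b \<times> 'b) set set \<Rightarrow> bool" where
  "F_star_inverse S \<longleftrightarrow>
     (\<forall>a\<in>S. a \<noteq> {} \<longrightarrow> (\<exists>!m. maximal_in S m \<and> nat_le S a m))"

definition principal_right_ideals :: "'a::monoid_mult set set" where
  "principal_right_ideals = {{a * x | x. True} | a. True}"

definition join_semilattice_incl :: "'b set set \<Rightarrow> bool" where
  "join_semilattice_incl P \<longleftrightarrow>
     (\<forall>I\<in>P. \<forall>J\<in>P. \<exists>K\<in>P. I \<subseteq> K \<and> J \<subseteq> K \<and> (\<forall>L\<in>P. I \<subseteq> L \<and> J \<subseteq> L \<longrightarrow> K \<subseteq> L))"

end

theory Submission
  imports Defs
begin

definition PP :: "'a::monoid_mult \<Rightarrow> 'a \<Rightarrow> ('a \<times> 'a) set" where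
  "PP a b = {(z*a, z*b) | z. True}"

definition good :: "('a::monoid_mult \<times> 'a) set \<Rightarrow> bool" where
  "good f \<longleftrightarrow> single_valued f \<and> single_valued (f\<inverse>) \<and>
     (\<forall>x y z. (x,y) \<in> f \<longrightarrow> (z*x, z*y) \<in> f)"

lemma IH_good:
  assumes rc: "\<forall>a b c :: 'a::monoid_mult. a * c = b * c \<longrightarrow> a = b"
  shows "(f::('a\<times>'a) set) \<in> IH \<Longrightarrow> good f"
proof (induction rule: IH.induct)
  case (gen a)
  show ?case unfolding good_def rho_def single_valued_def
    using rc by (auto simp: mult.assoc)
next
  case one
  show ?case unfolding good_def single_valued_def by auto
next
  case (inv f)
  then show ?case unfolding good_def by auto
next
  case (comp f g)
  then show ?case unfolding good_def
    by (auto intro: single_valued_relcomp simp: converse_relcomp) blast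
qed

lemma IH0_good:
  assumes rc: "\<forall>a b c :: 'a::monoid_mult. a * c = b * c \<longrightarrow> a = b"
  shows "(f::('a\<times>'a) set) \<in> IH0 \<Longrightarrow> good f"
  unfolding IH0_def using IH_good[OF rc] by (auto simp: good_def)

lemma IH0_Id: "Id \<in> IH0" unfolding IH0_def by (simp add: IH.one)
lemma IH0_inv: "f \<in> IH0 \<Longrightarrow> f\<inverse> \<in> IH0" unfolding IH0_def by (auto intro: IH.inv)
lemma IH0_comp: "f \<in> IH0 \<Longrightarrow> g \<in> IH0 \<Longrightarrow> f O g \<in> IH0"
  unfolding IH0_def by (auto intro: IH.comp)

lemma PP_eq: "PP a b = (rho a)\<inverse> O rho b"
  unfolding PP_def rho_def by auto

lemma PP_IH0: "PP a b \<in> IH0"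
  unfolding PP_eq IH0_def by (auto intro: IH.intros)

lemma PP_ne: "PP a b \<noteq> {}" unfolding PP_def by auto

lemma PP_sub:
  assumes rc: "\<forall>a b c :: 'a::monoid_mult. a * c = b * c \<longrightarrow> a = b"
  shows "PP (s::'a) t \<subseteq> PP a b \<longleftrightarrow> (\<exists>u. s = u*a \<and> t = u*b)"
proof
  assume "PP s t \<subseteq> PP a b"
  moreover have "(s,t) \<in> PP s t" unfolding PP_def by (metis (mono_tags) mem_Collect_eq mult_1_left)
  ultimately show "\<exists>u. s = u*a \<and> t = u*b" unfolding PP_def by blast
next
  assume "\<exists>u. s = u*a \<and> t = u*b"
  then obtain u where "s = u*a" "t = u*b" by blast
  then show "PP s t \<subseteq> PP a b" unfolding PP_def by (auto, metis mult.assoc)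
qed

lemma ideal_sub:
  "{(k::'a::monoid_mult) * x | x. True} \<subseteq> {l * x | x. True} \<longleftrightarrow> (\<exists>v. k = l*v)"
proof
  assume "{k * x | x. True} \<subseteq> {l * x | x. True}"
  moreover have "k \<in> {k * x | x. True}" by (metis (mono_tags) mem_Collect_eq mult_1_right)
  ultimately show "\<exists>v. k = l*v" by blast
next
  assume "\<exists>v. k = l*v"
  then show "{k * x | x. True} \<subseteq> {l * x | x. True}" by (auto simp: mult.assoc)
qed


lemma idem_sub_Id:
  assumes g: "good e" and ee: "e O e = e"
  shows "e \<subseteq> Id"
proof
  fix p assume p: "p \<in> e"
  obtain x y where xy: "p = (x,y)" by (cases p)
  with p ee obtain w where "(x,w) \<in> e" "(w,y) \<in> e" by blast
  with xy p g have "w = y" unfolding good_def by (meson single_valuedD)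
  with \<open>(w,y) \<in> e\<close> have "(y,y) \<in> e" by simp
  with xy p g have "x = y" unfolding good_def by (meson single_valuedD converse_iff)
  with xy show "p \<in> Id" by simp
qed

lemma nat_le_iff:
  assumes rc: "\<forall>a b c :: 'a::monoid_mult. a * c = b * c \<longrightarrow> a = b"
    and f: "(f::('a\<times>'a) set) \<in> IH0" and g: "g \<in> IH0"
  shows "nat_le IH0 f g \<longleftrightarrow> f \<subseteq> g"
proof
  assume "nat_le IH0 f g"
  then obtain e where e: "idem_in IH0 e" "f = e O g" unfolding nat_le_def by blast
  then have "good e" using IH0_good[OF rc] unfolding idem_in_def by blast
  with e have "e \<subseteq> Id" using idem_sub_Id unfolding idem_in_def by blast
  with e show "f \<subseteq> g" by blast
next
  assume sub: "f \<subseteq> g"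
  have gf: "good f" "good g" using f g IH0_good[OF rc] by auto
  have fff: "f O f\<inverse> O f = f"
  proof
    show "f O f\<inverse> O f \<subseteq> f"
    proof
      fix p assume "p \<in> f O f\<inverse> O f"
      then obtain x y w v where p: "p = (x,y)" "(x,w) \<in> f" "(v,w) \<in> f" "(v,y) \<in> f" by blast
      then have "x = v" using gf(1) unfolding good_def by (meson single_valuedD converse_iff)
      with p show "p \<in> f" by simp
    qed
    show "f \<subseteq> f O f\<inverse> O f"
    proof
      fix p assume p: "p \<in> f"
      obtain x y where xy: "p = (x,y)" by (cases p)
      have "(y,x) \<in> f\<inverse>" using p xy by simp
      then have "(x,x) \<in> f O f\<inverse>" using p xy by (meson relcompI)
      then have "(x,y) \<in> (f O f\<inverse>) O f" using p xy by (meson relcompI)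
      then show "p \<in> f O f\<inverse> O f" using xy by (simp add: O_assoc)
    qed
  qed
  have "idem_in IH0 (f O f\<inverse>)"
    unfolding idem_in_def
  proof
    show "f O f\<inverse> \<in> IH0" using f by (simp add: IH0_comp IH0_inv)
    have "(f O f\<inverse>) O (f O f\<inverse>) = (f O f\<inverse> O f) O f\<inverse>" by (simp add: O_assoc)
    then show "(f O f\<inverse>) O (f O f\<inverse>) = f O f\<inverse>" using fff by simp
  qed
  moreover have "f = (f O f\<inverse>) O g"
  proof
    show "f \<subseteq> (f O f\<inverse>) O g"
    proof
      fix p assume p: "p \<in> f"
      obtain x y where xy: "p = (x,y)" by (cases p)
      have "(x,x) \<in> f O f\<inverse>" using p xy by (meson converseI relcompI)
      moreover have "(x,y) \<in> g" using p xy sub by blast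
      ultimately show "p \<in> (f O f\<inverse>) O g" using xy by (meson relcompI)
    qed
    show "(f O f\<inverse>) O g \<subseteq> f"
    proof
      fix p assume "p \<in> (f O f\<inverse>) O g"
      then obtain x y w v where p: "p = (x,y)" "(x,w) \<in> f" "(v,w) \<in> f" "(v,y) \<in> g" by blast
      then have "x = v" using gf(1) unfolding good_def by (meson single_valuedD converse_iff)
      with p sub have "y = w" using gf(2) unfolding good_def by (meson single_valuedD subsetD)
      with p show "p \<in> f" by simp
    qed
  qed
  ultimately show "nat_le IH0 f g" unfolding nat_le_def by blast
qed

lemma total_is_rho:
  assumes rc: "\<forall>a b c :: 'a::monoid_mult. a * c = b * c \<longrightarrow> a = b"
    and c: "(c::('a\<times>'a) set) \<in> IH0" and cs: "Id = c O s"
  shows "\<exists>m. c = rho m"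
proof -
  have "(1,1) \<in> c O s" using cs by blast
  then obtain m where m: "(1,m) \<in> c" by blast
  have gc: "good c" using c IH0_good[OF rc] by auto
  have "c = rho m"
  proof
    show "rho m \<subseteq> c"
    proof
      fix p assume "p \<in> rho m"
      then obtain x where p: "p = (x, x*m)" unfolding rho_def by blast
      have "(x*1, x*m) \<in> c" using gc m unfolding good_def by blast
      with p show "p \<in> c" by simp
    qed
    show "c \<subseteq> rho m"
    proof
      fix p assume p: "p \<in> c"
      obtain x y where xy: "p = (x,y)" by (cases p)
      have "(x*1, x*m) \<in> c" using gc m unfolding good_def by blast
      then have "(x, x*m) \<in> c" by simp
      with p xy gc have "y = x*m" unfolding good_def by (meson single_valuedD)
      with xy show "p \<in> rho m" unfolding rho_def by simp
    qed
  qed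
  then show ?thesis by blast
qed

lemma Range_relcomp_subset: "Range (r O s) \<subseteq> Range s" by blast

lemma range_principal:
  assumes rc: "\<forall>a b c :: 'a::monoid_mult. a * c = b * c \<longrightarrow> a = b"
    and bis: "zero_bisimple (IH0 :: ('a \<times> 'a) set set)"
    and f: "(f::('a\<times>'a) set) \<in> IH0" and fne: "f \<noteq> {}"
  shows "\<exists>m. Range f = {x * m | x. True}"
proof -
  have "green_D IH0 f Id" using bis f fne IH0_Id unfolding zero_bisimple_def by blast
  then obtain c where c: "c \<in> IH0" "green_L IH0 f c" "green_R IH0 c Id"
    unfolding green_D_def by blast
  have eqR: "{c O s | s. s \<in> IH0} = {Id O s | s. s \<in> IH0}"
    using c(3) unfolding green_R_def .
  have eqL: "{s O f | s. s \<in> IH0} = {s O c | s. s \<in> IH0}"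
    using c(2) unfolding green_L_def .
  have "Id = Id O Id \<and> Id \<in> IH0" using IH0_Id by simp
  then have "Id \<in> {Id O s | s. s \<in> IH0}" by blast
  then have "Id \<in> {c O s | s. s \<in> IH0}" by (subst eqR)
  then obtain s where "Id = c O s" by blast
  then obtain m where m: "c = rho m" using total_is_rho[OF rc c(1)] by blast
  have "f = Id O f \<and> Id \<in> IH0" using IH0_Id by simp
  then have "f \<in> {s O f | s. s \<in> IH0}" by blast
  then have "f \<in> {s O c | s. s \<in> IH0}" by (subst eqL[symmetric])
  then obtain s1 where s1: "f = s1 O c" by blast
  have "c = Id O c \<and> Id \<in> IH0" using IH0_Id by simp
  then have "c \<in> {s O c | s. s \<in> IH0}" by blast
  then have "c \<in> {s O f | s. s \<in> IH0}" by (subst eqL)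
  then obtain s2 where s2: "c = s2 O f" by blast
  have "Range f \<subseteq> Range c" unfolding s1 by (rule Range_relcomp_subset)
  moreover have "Range c \<subseteq> Range f" by (subst s2, rule Range_relcomp_subset)
  ultimately have "Range f = Range c" by (rule subset_antisym)
  moreover have "Range c = {x * m | x. True}" using m unfolding rho_def by auto
  ultimately show ?thesis by blast
qed

lemma IH_structure:
  assumes rc: "\<forall>a b c :: 'a::monoid_mult. a * c = b * c \<longrightarrow> a = b"
    and bis: "zero_bisimple (IH0 :: ('a \<times> 'a) set set)"
    and f: "(f::('a\<times>'a) set) \<in> IH0" and fne: "f \<noteq> {}"
  shows "\<exists>n y. f = PP n y"
proof -
  have "f\<inverse> \<in> IH0" "f\<inverse> \<noteq> {}" using f fne IH0_inv by auto
  then obtain n where n: "Domain f = {x * n | x. True}"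
    using range_principal[OF rc bis] by (metis Range_converse)
  have "n \<in> Domain f" unfolding n by (metis (mono_tags) mem_Collect_eq mult_1_left)
  then obtain y where y: "(n,y) \<in> f" by blast
  have gf: "good f" using f IH0_good[OF rc] by auto
  have "f = PP n y"
  proof
    show "PP n y \<subseteq> f"
    proof
      fix p assume "p \<in> PP n y"
      then obtain z where p: "p = (z*n, z*y)" unfolding PP_def by blast
      have "(z*n, z*y) \<in> f" using gf y unfolding good_def by blast
      with p show "p \<in> f" by simp
    qed
    show "f \<subseteq> PP n y"
    proof
      fix p assume p: "p \<in> f"
      obtain x w where xw: "p = (x,w)" by (cases p)
      then have "x \<in> Domain f" using p by blast
      then obtain z where z: "x = z*n" unfolding n by blast
      have "(z*n, z*y) \<in> f" using gf y unfolding good_def by blast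
      with p xw z gf have "w = z*y" unfolding good_def by (meson single_valuedD)
      with xw z show "p \<in> PP n y" unfolding PP_def by blast
    qed
  qed
  then show ?thesis by blast
qed


theorem proposition4p2:
  assumes left_cancel: "\<And>a b c :: 'a::monoid_mult. c * a = c * b \<Longrightarrow> a = b"
    and right_cancel: "\<And>a b c :: 'a. a * c = b * c \<Longrightarrow> a = b"
    and bisimple: "zero_bisimple (IH0 :: ('a \<times> 'a) set set)"
  shows "F_star_inverse (IH0 :: ('a \<times> 'a) set set) \<longleftrightarrow>
         join_semilattice_incl (principal_right_ideals :: 'a set set)"
proof -
  have rc: "\<forall>a b c :: 'a. a * c = b * c \<longrightarrow> a = b" using right_cancel by blast
  have nl: "\<And>f g. f \<in> (IH0::('a\<times>'a) set set) \<Longrightarrow> g \<in> IH0 \<Longrightarrow> nat_le IH0 f g \<longleftrightarrow> f \<subseteq> g"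
    using nat_le_iff[OF rc] by blast
  have mx: "\<And>m. maximal_in (IH0::('a\<times>'a) set set) m \<longleftrightarrow> m \<in> IH0 \<and> (\<forall>x\<in>IH0. m \<subseteq> x \<longrightarrow> x = m)"
    unfolding maximal_in_def using nl by blast
  have st: "\<And>f. f \<in> (IH0::('a\<times>'a) set set) \<Longrightarrow> f \<noteq> {} \<Longrightarrow> \<exists>n y. f = PP n y"
    using IH_structure[OF rc bisimple] by blast
  have sub: "\<And>s t a b :: 'a. PP s t \<subseteq> PP a b \<longleftrightarrow> (\<exists>u. s = u*a \<and> t = u*b)"
    using PP_sub[OF rc] by blast
  have unit: "\<And>k v w :: 'a. k = k * v * w \<Longrightarrow> w * v = 1"
  proof -
    fix k v w :: 'a assume "k = k * v * w"
    then have "k * 1 = k * (v * w)" by (simp add: mult.assoc)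
    then have vw: "v * w = 1" using left_cancel by metis
    have "v * (w * v) = v * 1" using vw by (simp flip: mult.assoc)
    then show "w * v = 1" using left_cancel by metis
  qed
  have key: "\<And>f m. f \<in> (IH0::('a\<times>'a) set set) \<Longrightarrow>
      (maximal_in IH0 m \<and> nat_le IH0 f m) = ((m \<in> IH0 \<and> (\<forall>x\<in>IH0. m \<subseteq> x \<longrightarrow> x = m)) \<and> f \<subseteq> m)"
  proof -
    fix f m assume f: "f \<in> (IH0::('a\<times>'a) set set)"
    show "(maximal_in IH0 m \<and> nat_le IH0 f m) = ((m \<in> IH0 \<and> (\<forall>x\<in>IH0. m \<subseteq> x \<longrightarrow> x = m)) \<and> f \<subseteq> m)"
    proof (cases "m \<in> IH0")
      case True
      then show ?thesis using mx[of m] nl[OF f True] by simp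
    next
      case False
      then show ?thesis unfolding maximal_in_def by simp
    qed
  qed
  have Fst: "F_star_inverse (IH0 :: ('a \<times> 'a) set set) \<longleftrightarrow>
     (\<forall>s t :: 'a. \<exists>!m. (m \<in> IH0 \<and> (\<forall>x\<in>IH0. m \<subseteq> x \<longrightarrow> x = m)) \<and> PP s t \<subseteq> m)"
  proof
    assume F: "F_star_inverse (IH0 :: ('a \<times> 'a) set set)"
    show "\<forall>s t :: 'a. \<exists>!m. (m \<in> IH0 \<and> (\<forall>x\<in>IH0. m \<subseteq> x \<longrightarrow> x = m)) \<and> PP s t \<subseteq> m"
    proof (intro allI)
      fix s t :: 'a
      have "PP s t \<in> IH0" "PP s t \<noteq> {}" by (rule PP_IH0, rule PP_ne)
      have F': "\<forall>a\<in>(IH0::('a\<times>'a) set set). a \<noteq> {} \<longrightarrow> (\<exists>!m. maximal_in IH0 m \<and> nat_le IH0 a m)"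
        using F unfolding F_star_inverse_def .
      have "\<exists>!m. maximal_in IH0 m \<and> nat_le IH0 (PP s t) m"
        using mp[OF bspec[OF F' PP_IH0] PP_ne] .
      then show "\<exists>!m. (m \<in> IH0 \<and> (\<forall>x\<in>IH0. m \<subseteq> x \<longrightarrow> x = m)) \<and> PP s t \<subseteq> m"
        by (simp only: key[OF PP_IH0])
    qed
  next
    assume H: "\<forall>s t :: 'a. \<exists>!m. (m \<in> IH0 \<and> (\<forall>x\<in>IH0. m \<subseteq> x \<longrightarrow> x = m)) \<and> PP s t \<subseteq> m"
    show "F_star_inverse (IH0 :: ('a \<times> 'a) set set)"
      unfolding F_star_inverse_def
    proof (intro ballI impI)
      fix f :: "('a\<times>'a) set" assume f: "f \<in> IH0" "f \<noteq> {}"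
      then obtain s t where fst: "f = PP s t" using st by blast
      have "\<exists>!m. (m \<in> IH0 \<and> (\<forall>x\<in>IH0. m \<subseteq> x \<longrightarrow> x = m)) \<and> PP s t \<subseteq> m"
        by (rule H[THEN spec, THEN spec])
      then show "\<exists>!m. maximal_in IH0 m \<and> nat_le IH0 f m"
        unfolding fst by (simp only: key[OF PP_IH0])
    qed
  qed
  have Jn: "join_semilattice_incl (principal_right_ideals :: 'a set set) \<longleftrightarrow>
    (\<forall>s t :: 'a. \<exists>k. (\<exists>a. s = k*a) \<and> (\<exists>b. t = k*b) \<and>
        (\<forall>l a' b'. s = l*a' \<and> t = l*b' \<longrightarrow> (\<exists>v. k = l*v)))"
  proof -
    define R where "R = (\<lambda>a::'a. {a * x | x. True})"
    have RS: "\<And>k l. R k \<subseteq> R l \<longleftrightarrow> (\<exists>v. k = l*v)" unfolding R_def by (rule ideal_sub)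
    have PR: "(principal_right_ideals :: 'a set set) = R ` UNIV"
      unfolding principal_right_ideals_def R_def by blast
    show ?thesis unfolding join_semilattice_incl_def PR
    proof
      assume JS: "\<forall>I\<in>range R. \<forall>J\<in>range R. \<exists>K\<in>range R. I \<subseteq> K \<and> J \<subseteq> K \<and>
                    (\<forall>L\<in>range R. I \<subseteq> L \<and> J \<subseteq> L \<longrightarrow> K \<subseteq> L)"
      show "\<forall>s t :: 'a. \<exists>k. (\<exists>a. s = k*a) \<and> (\<exists>b. t = k*b) \<and>
        (\<forall>l a' b'. s = l*a' \<and> t = l*b' \<longrightarrow> (\<exists>v. k = l*v))"
      proof (intro allI)
        fix s t :: 'a
        have rs: "R s \<in> range R" by (rule rangeI)
        have rt: "R t \<in> range R" by (rule rangeI)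
        have "\<exists>K\<in>range R. R s \<subseteq> K \<and> R t \<subseteq> K \<and>
                    (\<forall>L\<in>range R. R s \<subseteq> L \<and> R t \<subseteq> L \<longrightarrow> K \<subseteq> L)"
          using bspec[OF bspec[OF JS rs] rt] .
        then obtain K where K: "K \<in> range R" "R s \<subseteq> K" "R t \<subseteq> K"
          "\<forall>L\<in>range R. R s \<subseteq> L \<and> R t \<subseteq> L \<longrightarrow> K \<subseteq> L" by (elim bexE conjE) (intro that)
        then obtain k where k: "K = R k" by blast
        have "\<exists>a. s = k*a" using K(2) k by (simp add: RS)
        moreover have "\<exists>b. t = k*b" using K(3) k by (simp add: RS)
        moreover have "\<forall>l a' b'. s = l*a' \<and> t = l*b' \<longrightarrow> (\<exists>v. k = l*v)"
        proof (intro allI impI)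
          fix l a' b' assume lab: "s = l*a' \<and> t = l*b'"
          then have "R s \<subseteq> R l" "R t \<subseteq> R l" unfolding RS by blast+
          then have "K \<subseteq> R l" using K(4) by blast
          then show "\<exists>v. k = l*v" using k by (simp add: RS)
        qed
        ultimately show "\<exists>k. (\<exists>a. s = k*a) \<and> (\<exists>b. t = k*b) \<and>
          (\<forall>l a' b'. s = l*a' \<and> t = l*b' \<longrightarrow> (\<exists>v. k = l*v))" by blast
      qed
    next
      assume H: "\<forall>s t :: 'a. \<exists>k. (\<exists>a. s = k*a) \<and> (\<exists>b. t = k*b) \<and>
        (\<forall>l a' b'. s = l*a' \<and> t = l*b' \<longrightarrow> (\<exists>v. k = l*v))"
      show "\<forall>I\<in>range R. \<forall>J\<in>range R. \<exists>K\<in>range R. I \<subseteq> K \<and> J \<subseteq> K \<and>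
                    (\<forall>L\<in>range R. I \<subseteq> L \<and> J \<subseteq> L \<longrightarrow> K \<subseteq> L)"
      proof (intro ballI)
        fix I J assume "I \<in> range R" "J \<in> range R"
        then obtain s t where st: "I = R s" "J = R t" by blast
        from H have "\<exists>k. (\<exists>a. s = k*a) \<and> (\<exists>b. t = k*b) \<and>
          (\<forall>l a' b'. s = l*a' \<and> t = l*b' \<longrightarrow> (\<exists>v. k = l*v))" by (rule allE) (erule allE)
        then obtain k where kk: "(\<exists>a. s = k*a) \<and> (\<exists>b. t = k*b) \<and>
          (\<forall>l a' b'. s = l*a' \<and> t = l*b' \<longrightarrow> (\<exists>v. k = l*v))" ..
        have k1: "\<exists>a. s = k*a" using kk by (rule conjunct1)
        have k2: "\<exists>b. t = k*b" using kk by simp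
        have k3: "\<forall>l a' b'. s = l*a' \<and> t = l*b' \<longrightarrow> (\<exists>v. k = l*v)" using kk by simp
        have I: "I \<subseteq> R k" unfolding st RS by (rule k1)
        have J: "J \<subseteq> R k" unfolding st RS by (rule k2)
        have L: "\<forall>L\<in>range R. I \<subseteq> L \<and> J \<subseteq> L \<longrightarrow> R k \<subseteq> L"
        proof (intro ballI impI)
          fix L assume L: "L \<in> range R" "I \<subseteq> L \<and> J \<subseteq> L"
          then obtain l where l: "L = R l" by blast
          have "I \<subseteq> L" "J \<subseteq> L" using L(2) by simp_all
          then have "\<exists>a'. s = l*a'" "\<exists>b'. t = l*b'" unfolding st l RS .
          then obtain a' b' where "s = l*a'" "t = l*b'" by blast
          then have "\<exists>v. k = l*v" using k3 by blast
          then show "R k \<subseteq> L" unfolding l RS .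
        qed
        show "\<exists>K\<in>range R. I \<subseteq> K \<and> J \<subseteq> K \<and> (\<forall>L\<in>range R. I \<subseteq> L \<and> J \<subseteq> L \<longrightarrow> K \<subseteq> L)"
          using I J L rangeI[of R k] by blast
      qed
    qed
  qed
  show ?thesis unfolding Fst Jn
  proof
    assume H: "\<forall>s t :: 'a. \<exists>!m. (m \<in> IH0 \<and> (\<forall>x\<in>IH0. m \<subseteq> x \<longrightarrow> x = m)) \<and> PP s t \<subseteq> m"
    show "\<forall>s t :: 'a. \<exists>k. (\<exists>a. s = k*a) \<and> (\<exists>b. t = k*b) \<and>
        (\<forall>l a' b'. s = l*a' \<and> t = l*b' \<longrightarrow> (\<exists>v. k = l*v))"
    proof (intro allI)
      fix s t :: 'a
      from H obtain m where m: "m \<in> IH0" "\<forall>x\<in>IH0. m \<subseteq> x \<longrightarrow> x = m" "PP s t \<subseteq> m"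
        and uq: "\<And>m'. (m' \<in> IH0 \<and> (\<forall>x\<in>IH0. m' \<subseteq> x \<longrightarrow> x = m')) \<and> PP s t \<subseteq> m' \<Longrightarrow> m' = m"
        by metis
      have "m \<noteq> {}" using m(3) PP_ne by blast
      then obtain a b where mab: "m = PP a b" using st m(1) by blast
      then obtain k where k: "s = k*a" "t = k*b" using m(3) sub by blast
      show "\<exists>k. (\<exists>a. s = k*a) \<and> (\<exists>b. t = k*b) \<and>
        (\<forall>l a' b'. s = l*a' \<and> t = l*b' \<longrightarrow> (\<exists>v. k = l*v))"
      proof -
       have "\<forall>l a' b'. s = l*a' \<and> t = l*b' \<longrightarrow> (\<exists>v. k = l*v)"
       proof (intro allI impI)
        fix l a' b' assume lab: "s = l*a' \<and> t = l*b'"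
        have g: "PP s t \<subseteq> PP a' b'" using lab sub by blast
        from H obtain m'' where m'': "m'' \<in> IH0" "\<forall>x\<in>IH0. m'' \<subseteq> x \<longrightarrow> x = m''" "PP a' b' \<subseteq> m''"
          by metis
        have "m'' = m" using uq m'' g by blast
        then have "PP a' b' \<subseteq> PP a b" using m''(3) mab by simp
        then obtain v where v: "a' = v*a" "b' = v*b" using sub by blast
        have "k * a = (l * v) * a" using k lab v by (simp add: mult.assoc)
        then show "\<exists>v. k = l*v" using right_cancel by blast
       qed
       then show ?thesis using k by blast
      qed
    qed
  next
    assume J: "\<forall>s t :: 'a. \<exists>k. (\<exists>a. s = k*a) \<and> (\<exists>b. t = k*b) \<and>
        (\<forall>l a' b'. s = l*a' \<and> t = l*b' \<longrightarrow> (\<exists>v. k = l*v))"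
    show "\<forall>s t :: 'a. \<exists>!m. (m \<in> IH0 \<and> (\<forall>x\<in>IH0. m \<subseteq> x \<longrightarrow> x = m)) \<and> PP s t \<subseteq> m"
    proof (intro allI)
      fix s t :: 'a
      from J obtain k a b where k: "s = k*a" "t = k*b"
        and lst: "\<And>l a' b'. s = l*a' \<Longrightarrow> t = l*b' \<Longrightarrow> \<exists>v. k = l*v" by metis
      have maxab: "\<forall>x\<in>IH0. PP a b \<subseteq> x \<longrightarrow> x = PP a b"
      proof (intro ballI impI)
        fix x assume x: "x \<in> IH0" "PP a b \<subseteq> x"
        then have "x \<noteq> {}" using PP_ne by blast
        then obtain a' b' where xab: "x = PP a' b'" using st x(1) by blast
        then obtain v where v: "a = v*a'" "b = v*b'" using x(2) sub[THEN iffD1] by blast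
        have "s = (k*v)*a'" "t = (k*v)*b'" using k v by (simp_all add: mult.assoc)
        then obtain w where "k = (k*v)*w" using lst by blast
        then have wv: "w * v = 1" using unit by blast
        have "a' = w * a" using v wv by (metis mult.assoc mult_1_left)
        moreover have "b' = w * b" using v wv by (metis mult.assoc mult_1_left)
        ultimately have "x \<subseteq> PP a b" unfolding xab by (intro sub[THEN iffD2] exI conjI)
        then show "x = PP a b" using x(2) by blast
      qed
      show "\<exists>!m. (m \<in> IH0 \<and> (\<forall>x\<in>IH0. m \<subseteq> x \<longrightarrow> x = m)) \<and> PP s t \<subseteq> m"
      proof (rule ex1I)
        show "(PP a b \<in> IH0 \<and> (\<forall>x\<in>IH0. PP a b \<subseteq> x \<longrightarrow> x = PP a b)) \<and> PP s t \<subseteq> PP a b"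
        proof (intro conjI)
          show "PP a b \<in> IH0" by (rule PP_IH0)
          show "\<forall>x\<in>IH0. PP a b \<subseteq> x \<longrightarrow> x = PP a b" by (rule maxab)
          show "PP s t \<subseteq> PP a b" unfolding k by (rule sub[THEN iffD2], rule exI[of _ k], simp)
        qed
        fix m' assume m': "(m' \<in> IH0 \<and> (\<forall>x\<in>IH0. m' \<subseteq> x \<longrightarrow> x = m')) \<and> PP s t \<subseteq> m'"
        then have m1: "m' \<in> IH0" and m2: "\<forall>x\<in>IH0. m' \<subseteq> x \<longrightarrow> x = m'"
          and m3: "PP s t \<subseteq> m'" by auto
        have "m' \<noteq> {}" using m3 PP_ne[of s t] by auto
        then obtain a' b' where mab: "m' = PP a' b'" using st[OF m1] by blast
        then have "\<exists>u. s = u*a' \<and> t = u*b'" using m3 sub[of s t a' b'] by simp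
        then obtain u where u: "s = u*a'" "t = u*b'" by blast
        then obtain w where w: "k = u*w" using lst by blast
        have e1: "u * a' = u * (w * a)" using u k w by (simp add: mult.assoc)
        have e2: "u * b' = u * (w * b)" using u k w by (simp add: mult.assoc)
        have "a' = w*a" using left_cancel[OF e1] .
        moreover have "b' = w*b" using left_cancel[OF e2] .
        ultimately have "m' \<subseteq> PP a b" unfolding mab by (intro sub[THEN iffD2] exI conjI)
        then have "PP a b = m'" using m2 PP_IH0[of a b] by blast
        then show "m' = PP a b" by simp
      qed
    qed
  qed
qed

end
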